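(* Let $\varepsilon \in [0,1]$ and let $w_1, w_2 \in \mathbb{S}^{n-1}$ satisfy $\|w_1 - w_2\| \leq 1 - \varepsilon^2/2$. Let $v_1, v \in \mathbb{R}^n$ satisfy $\langle w_1, v_1\rangle \geq 1$, $\langle w_2, v\rangle \geq \langle w_2, v_1\rangle$, and $\|v_1\|, \|v\| \leq (1-\varepsilon^2/2)^{-1}$. Let $a \in \mathbb{S}^{n-1}$ satisfy $\langle a, v\rangle \geq 1$. Then $\|w_2 - a\| \leq 2\varepsilon + \|w_1 - w_2\|$.
   Context: $\|\cdot\|$ is the Euclidean norm and $\mathbb{S}^{n-1}$ the Euclidean unit sphere in $\mathbb{R}^n$. *)

theory Defs
  imports "HOL-Analysis.Analysis"
begin

end

theory Submission
  imports Defs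
begin

lemma unit_dist_sq:
  fixes x y :: "real ^ 'n"
  assumes "norm x = 1" "norm y = 1"
  shows "(norm (x - y))\<^sup>2 = 2 - 2 * (x \<bullet> y)"
proof -
  have "(norm (x - y))\<^sup>2 = (x - y) \<bullet> (x - y)" by (simp add: power2_norm_eq_inner)
  also have "\<dots> = x \<bullet> x + y \<bullet> y - 2 * (x \<bullet> y)" by (simp add: algebra_simps inner_commute)
  also have "x \<bullet> x = 1" using assms(1) by (metis norm_eq_1)
  also have "y \<bullet> y = 1" using assms(2) by (metis norm_eq_1)
  finally show ?thesis by simp
qed

theorem lemma3p6:
  fixes \<epsilon> :: real and w1 w2 v1 v a :: "real ^ 'n"
  assumes "0 \<le> \<epsilon>" "\<epsilon> \<le> 1"
    and "norm w1 = 1" "norm w2 = 1"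
    and "norm (w1 - w2) \<le> 1 - \<epsilon>\<^sup>2 / 2"
    and "w1 \<bullet> v1 \<ge> 1"
    and "w2 \<bullet> v \<ge> w2 \<bullet> v1"
    and "norm v1 \<le> inverse (1 - \<epsilon>\<^sup>2 / 2)"
    and "norm v \<le> inverse (1 - \<epsilon>\<^sup>2 / 2)"
    and "norm a = 1"
    and "a \<bullet> v \<ge> 1"
  shows "norm (w2 - a) \<le> 2 * \<epsilon> + norm (w1 - w2)"
proof -
  define c where "c = 1 - \<epsilon>\<^sup>2 / 2"
  define d where "d = norm (w1 - w2)"
  define p where "p = w1 \<bullet> w2"
  define t where "t = w1 \<bullet> v1"
  have e2: "\<epsilon>\<^sup>2 \<le> 1" using assms(1,2) by (simp add: power_le_one)
  have c: "1/2 \<le> c" "c \<le> 1" using e2 assms(1) by (auto simp: c_def)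
  have d0: "0 \<le> d" "d \<le> c" using assms(5) by (auto simp: d_def c_def)
  have pd: "d\<^sup>2 = 2 - 2 * p" using unit_dist_sq[OF assms(3,4)] by (simp add: d_def p_def)
  have p0: "p \<ge> 0"
  proof -
    have "d\<^sup>2 \<le> 1" using d0 c by (simp add: power_le_one)
    thus ?thesis using pd by simp
  qed
  have nv: "norm v > 0"
  proof (rule ccontr)
    assume "\<not> norm v > 0" hence "v = 0" by simp
    thus False using assms(11) by simp
  qed
  have nvc: "norm v \<le> 1 / c" using assms(9) by (simp add: c_def field_simps)
  have nv1c: "norm v1 \<le> 1 / c" using assms(8) by (simp add: c_def field_simps)
  define u where "u = (1 / norm v) *\<^sub>R v"
  have nu: "norm u = 1" using nv by (simp add: u_def)
  have cnv: "c * norm v \<le> 1" using nvc c by (simp add: field_simps)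
  have au: "a \<bullet> u \<ge> c"
  proof -
    have "a \<bullet> u = (a \<bullet> v) / norm v" by (simp add: u_def)
    also have "\<dots> \<ge> 1 / norm v" using assms(11) nv by (simp add: divide_right_mono)
    finally have "a \<bullet> u \<ge> 1 / norm v" .
    moreover have "1 / norm v \<ge> c" using cnv nv by (simp add: field_simps)
    ultimately show ?thesis by linarith
  qed
  have "(norm (a - u))\<^sup>2 \<le> \<epsilon>\<^sup>2"
    using unit_dist_sq[OF assms(10) nu] au by (simp add: c_def)
  hence au2: "norm (a - u) \<le> \<epsilon>" using assms(1) by (meson norm_ge_zero power2_le_imp_le)
  define Q where "Q = norm (w2 - p *\<^sub>R w1)"
  define R where "R = norm (v1 - t *\<^sub>R w1)"
  have w11: "w1 \<bullet> w1 = 1" using assms(3) by (metis norm_eq_1)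
  have w22: "w2 \<bullet> w2 = 1" using assms(4) by (metis norm_eq_1)
  have orth: "(w2 - p *\<^sub>R w1) \<bullet> w1 = 0"
    using inner_commute[of w2 w1] by (simp add: inner_diff_left p_def w11)
  have "(w2 - p *\<^sub>R w1) \<bullet> v1 = (w2 - p *\<^sub>R w1) \<bullet> (v1 - t *\<^sub>R w1)"
    using orth by (simp add: inner_diff_right)
  also have "\<dots> \<ge> - (Q * R)" unfolding Q_def R_def
    by (smt (verit) Cauchy_Schwarz_ineq2)
  finally have cs: "w2 \<bullet> v1 \<ge> p * t - Q * R"
    by (simp add: inner_diff_left t_def)
  have Q2: "Q\<^sup>2 \<le> d\<^sup>2"
  proof -
    have "Q\<^sup>2 = (w2 - p *\<^sub>R w1) \<bullet> (w2 - p *\<^sub>R w1)" by (simp add: Q_def power2_norm_eq_inner)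
    also have "\<dots> = 1 - p\<^sup>2"
      using inner_commute[of w2 w1] by (simp add: inner_diff_left inner_diff_right w11 w22 p_def power2_eq_square)
    finally have "Q\<^sup>2 = 1 - p\<^sup>2" .
    moreover have "0 \<le> (1 - p) * (1 - p)" by simp
    ultimately show ?thesis using pd by (simp add: power2_eq_square algebra_simps)
  qed
  have Qd: "Q \<le> d" using Q2 d0 by (meson Q_def norm_ge_zero power2_le_imp_le)
  have R2: "R\<^sup>2 \<le> 1/c\<^sup>2 - 1"
  proof -
    have "R\<^sup>2 = (v1 - t *\<^sub>R w1) \<bullet> (v1 - t *\<^sub>R w1)" by (simp add: R_def power2_norm_eq_inner)
    also have "\<dots> = (norm v1)\<^sup>2 - t\<^sup>2"
      using inner_commute[of v1 w1] power2_norm_eq_inner[of v1] by (simp add: inner_diff_left inner_diff_right w11 t_def power2_eq_square)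
    also have "(norm v1)\<^sup>2 \<le> (1/c)\<^sup>2" using nv1c by (simp add: power_mono)
    moreover have "t\<^sup>2 \<ge> 1" using assms(6) t_def by (simp add: one_le_power)
    ultimately show ?thesis by (simp add: power_divide)
  qed
  have cR: "c * R \<le> \<epsilon>"
  proof -
    have "(c * R)\<^sup>2 = c\<^sup>2 * R\<^sup>2" by (simp add: power_mult_distrib)
    also have "\<dots> \<le> c\<^sup>2 * (1/c\<^sup>2 - 1)" using R2 by (simp add: mult_left_mono)
    also have "\<dots> = 1 - c\<^sup>2" using c by (simp add: field_simps)
    also have "\<dots> \<le> \<epsilon>\<^sup>2" unfolding c_def using assms(1) by (simp add: power2_eq_square algebra_simps)
    finally show ?thesis using assms(1) c by (meson power2_le_imp_le)
  qed
  have t1: "t \<ge> 1" using assms(6) t_def by simp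
  have QR0: "Q * R \<ge> 0" by (simp add: Q_def R_def)
  have wv1: "w2 \<bullet> v1 \<ge> p - Q * R" using cs t1 p0
    by (smt (verit) mult_left_mono mult.commute mult_cancel_left1)
  have wv1pos: "w2 \<bullet> v1 \<ge> 0"
  proof -
    have "w2 \<bullet> v1 = w1 \<bullet> v1 + (w2 - w1) \<bullet> v1" by (simp add: inner_diff_left)
    moreover have "(w2 - w1) \<bullet> v1 \<ge> - (d * norm v1)"
      using Cauchy_Schwarz_ineq2[of "w2 - w1" v1] by (simp add: d_def norm_minus_commute abs_le_iff)
    moreover have "d * norm v1 \<le> c * (1/c)" using d0 nv1c c by (intro mult_mono) auto
    ultimately show ?thesis using assms(6) c by simp
  qed
  have wu: "w2 \<bullet> u \<ge> c * p - d * \<epsilon>"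
  proof -
    have "w2 \<bullet> u = (w2 \<bullet> v) / norm v" by (simp add: u_def)
    also have "\<dots> \<ge> (w2 \<bullet> v1) / norm v" using assms(7) nv by (simp add: divide_right_mono)
    finally have a1: "w2 \<bullet> u \<ge> (w2 \<bullet> v1) / norm v" .
    have "(w2 \<bullet> v1) / norm v \<ge> c * (w2 \<bullet> v1)"
    proof -
      have "c * (w2 \<bullet> v1) * norm v \<le> w2 \<bullet> v1" using cnv wv1pos
        by (metis mult.commute mult.left_commute mult_left_le)
      thus ?thesis using nv by (simp add: field_simps)
    qed
    moreover have "c * (w2 \<bullet> v1) \<ge> c * (p - Q * R)" using wv1 c by (simp add: mult_left_mono)
    moreover have "Q * (c * R) \<le> d * \<epsilon>" using Qd cR d0 QR0 c
      by (intro mult_mono) (auto simp: Q_def R_def)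
    ultimately show ?thesis using a1 by (simp add: algebra_simps)
  qed
  have "(norm (w2 - u))\<^sup>2 \<le> (\<epsilon> + d)\<^sup>2"
  proof -
    have "(norm (w2 - u))\<^sup>2 = 2 - 2 * (w2 \<bullet> u)" using unit_dist_sq[OF assms(4) nu] .
    also have "\<dots> \<le> 2 - 2 * (c * p - d * \<epsilon>)" using wu by simp
    also have "\<dots> = \<epsilon>\<^sup>2 + d\<^sup>2 - \<epsilon>\<^sup>2 * d\<^sup>2 / 2 + 2 * d * \<epsilon>"
    proof -
      have pe: "p = 1 - d\<^sup>2 / 2" using pd by (simp add: field_simps)
      show ?thesis unfolding c_def pe by (simp add: algebra_simps power2_eq_square)
    qed
    also have "\<dots> \<le> (\<epsilon> + d)\<^sup>2" by (simp add: power2_sum algebra_simps)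
    finally show ?thesis .
  qed
  hence wu2: "norm (w2 - u) \<le> \<epsilon> + d" using assms(1) d0 by (meson add_nonneg_nonneg power2_le_imp_le)
  have "norm (w2 - a) \<le> norm (w2 - u) + norm (u - a)" using norm_triangle_ineq[of "w2 - u" "u - a"] by simp
  also have "norm (u - a) = norm (a - u)" by (rule norm_minus_commute)
  finally show ?thesis using au2 wu2 d_def by linarith
qed

end
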